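(* Let $\mathbf{A}\in\mathbb{R}^{m\times n}$ have all rows nonzero, let $b\in\mathcal{R}(\mathbf{A})$, and let $f:\mathbb{R}^n\to\mathbb{R}$ be finite everywhere and $1$-strongly convex, with $\hat x$ the unique solution of $\min_x f(x)$ subject to $\mathbf{A}x=b$. Fix a partition of the rows into $M$ blocks. Consider the block accelerated randomized Bregman–Kaczmarz method (ARBK): $z^0=y^0=0\in\mathbb{R}^m$, $\theta_0=1/M$, and for $k\ge0$: $v^k=(1-\theta_k)y^k+\theta_k z^k$; choose $i=i_k\in[M]$ uniformly at random, independently of the past; $$z^{k+1}=z^k-\frac{1}{M\theta_k}\,\frac{\mathbf{U}_i\big(\mathbf{A}_{(i)}\nabla f^*(\mathbf{A}^\top v^k)-b_{(i)}\big)}{\|\mathbf{A}_{(i)}\|_2^2},\quad y^{k+1}=v^k+M\theta_k(z^{k+1}-z^k),\quad \theta_{k+1}=\frac{\sqrt{\theta_k^4+4\theta_k^2}-\theta_k^2}{2},$$ and set $d^k=\mathbf{A}^\top y^k$, $x^k=\nabla f^*(d^k)$. Let $\hat y$ be any minimizer of $\Psi(y)=f^*(\mathbf{A}^\top y)-b^\top y$. Then for all $k\ge1$, $$\tfrac12\mathbb{E}\big[\|x^k-\hat x\|_2^2\big]\le\mathbb{E}\big[D_f^{d^k}(x^k,\hat x)\big]\le\frac{4M^2}{(k-1+2M)^2}\,C_0,$$ where $C_0=\big(1-\tfrac1M\big)D_f^{d^0}(x^0,\hat x)+\tfrac12\|y^0-\hat y\|_{\mathbf{B}}^2$.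
   Context: Block notation: $[m]$ is partitioned into $M$ consecutive blocks of sizes $m_1,\dots,m_M$; $\mathbf{I}_m=(\mathbf{U}_1,\dots,\mathbf{U}_M)$ with $\mathbf{U}_i\in\mathbb{R}^{m\times m_i}$, $\mathbf{A}_{(i)}=\mathbf{U}_i^\top\mathbf{A}$, $b_{(i)}=\mathbf{U}_i^\top b$, $y_{(i)}=\mathbf{U}_i^\top y$. $\|y\|_{\mathbf{B}}^2=\sum_{i=1}^M\|\mathbf{A}_{(i)}\|_2^2\,\|y_{(i)}\|_2^2$. $f^*$ is the Fenchel conjugate of $f$ (differentiable). For $x^*\in\partial f(x)$, $D_f^{x^*}(x,y)=f(y)-f(x)-\langle x^*,y-x\rangle$. Expectations are over the random block indices. *)

theory Defs
  imports "HOL-Analysis.Analysis"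
begin

text \<open>mu-strong convexity (here used with mu = 1), for a real-valued (hence finite everywhere) f.\<close>
definition strongly_convex :: "real \<Rightarrow> ('a::real_normed_vector \<Rightarrow> real) \<Rightarrow> bool" where
  "strongly_convex \<mu> f \<longleftrightarrow>
     (\<forall>x y t. 0 \<le> t \<and> t \<le> 1 \<longrightarrow>
        f (t *\<^sub>R x + (1 - t) *\<^sub>R y) \<le> t * f x + (1 - t) * f y - \<mu> / 2 * t * (1 - t) * (norm (x - y))\<^sup>2)"

definition fconj :: "('a::real_inner \<Rightarrow> real) \<Rightarrow> 'a \<Rightarrow> real" where
  "fconj f d = (SUP x. inner d x - f x)"

definition grad :: "('a::real_inner \<Rightarrow> real) \<Rightarrow> 'a \<Rightarrow> 'a" where
  "grad g x = (THE D. GDERIV g x :> D)"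

text \<open>Bregman distance D_f^{xs}(x,y) = f y - f x - <xs, y - x>.\<close>
definition bregman :: "('a::real_inner \<Rightarrow> real) \<Rightarrow> 'a \<Rightarrow> 'a \<Rightarrow> 'a \<Rightarrow> real" where
  "bregman f xs x y = f y - f x - inner xs (y - x)"

text \<open>Blocks: blk j is the (0-based) index of the block containing row j.
  block_proj blk i w = U_i U_i^T w (keep block i entries, zero the rest).\<close>
definition block_proj :: "('m::finite \<Rightarrow> nat) \<Rightarrow> nat \<Rightarrow> real^'m \<Rightarrow> real^'m" where
  "block_proj blk i w = (\<chi> j. if blk j = i then w $ j else 0)"

text \<open>Spectral norm ||A_(i)||_2 of the row block A_(i) = U_i^T A.\<close>
definition block_norm :: "real^'n^'m \<Rightarrow> ('m::finite \<Rightarrow> nat) \<Rightarrow> nat \<Rightarrow> real" where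
  "block_norm A blk i = onorm (\<lambda>x. block_proj blk i (A *v x))"

definition Bnorm_sq :: "real^'n^'m \<Rightarrow> ('m::finite \<Rightarrow> nat) \<Rightarrow> nat \<Rightarrow> real^'m \<Rightarrow> real" where
  "Bnorm_sq A blk M y = (\<Sum>i<M. (block_norm A blk i)\<^sup>2 * (norm (block_proj blk i y))\<^sup>2)"

text \<open>ARBK iteration. State (y^k, z^k, theta_k); s k is the block index i_k chosen at step k.\<close>
fun arbk :: "real^'n^'m \<Rightarrow> real^'m \<Rightarrow> (real^'n \<Rightarrow> real) \<Rightarrow> ('m::finite \<Rightarrow> nat) \<Rightarrow> nat
              \<Rightarrow> (nat \<Rightarrow> nat) \<Rightarrow> nat \<Rightarrow> (real^'m) \<times> (real^'m) \<times> real" where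
  "arbk A b f blk M s 0 = (0, 0, 1 / real M)"
| "arbk A b f blk M s (Suc k) =
     (let (y, z, \<theta>) = arbk A b f blk M s k;
          v = (1 - \<theta>) *\<^sub>R y + \<theta> *\<^sub>R z;
          i = s k;
          g = grad (fconj f) (transpose A *v v);
          r = block_proj blk i (A *v g - b) /\<^sub>R (block_norm A blk i)\<^sup>2;
          z' = z - (1 / (real M * \<theta>)) *\<^sub>R r;
          y' = v + (real M * \<theta>) *\<^sub>R (z' - z);
          \<theta>' = (sqrt (\<theta> ^ 4 + 4 * \<theta>\<^sup>2) - \<theta>\<^sup>2) / 2
      in (y', z', \<theta>'))"

definition arbk_y where "arbk_y A b f blk M s k = fst (arbk A b f blk M s k)"
definition arbk_d where "arbk_d A b f blk M s k = transpose A *v arbk_y A b f blk M s k"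
definition arbk_x where "arbk_x A b f blk M s k = grad (fconj f) (arbk_d A b f blk M s k)"

text \<open>Expectation over i_0,...,i_{k-1} i.i.d. uniform on {0..<M}.\<close>
definition expect :: "nat \<Rightarrow> nat \<Rightarrow> ((nat \<Rightarrow> nat) \<Rightarrow> real) \<Rightarrow> real" where
  "expect M k g = (\<Sum>s\<in>PiE {..<k} (\<lambda>_. {..<M}). g s) / real M ^ k"

end

theory Submission
  imports Defs
begin

lemma sc_convex:
  fixes f :: "'a::euclidean_space \<Rightarrow> real"
  assumes "strongly_convex 1 f" shows "convex_on UNIV f"
proof (rule convex_onI)
  fix x y :: "'a" and t :: real
  assume t: "0 < t" "t < 1"
  have "f ((1 - t) *\<^sub>R x + (1 - (1 - t)) *\<^sub>R y) \<le> (1 - t) * f x + (1 - (1 - t)) * f y - 1 / 2 * (1 - t) * (1 - (1 - t)) * (norm (x - y))\<^sup>2"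
    using assms[unfolded strongly_convex_def, rule_format, of "1 - t" x y] t by simp
  moreover have "0 \<le> 1 / 2 * (1 - t) * (1 - (1 - t)) * (norm (x - y))\<^sup>2" using t by auto
  ultimately show "f ((1 - t) *\<^sub>R x + t *\<^sub>R y) \<le> (1 - t) * f x + t * f y"
    by simp
qed (simp add: convex_UNIV)

lemma sc_growth:
  fixes f :: "'a::euclidean_space \<Rightarrow> real"
  assumes sc: "strongly_convex 1 f"
  shows "\<exists>C C'. \<forall>x. f x \<ge> (norm x)\<^sup>2 / 2 - C * norm x - C'"
proof -
  have cont: "continuous_on UNIV f"
    using convex_on_continuous[OF open_UNIV sc_convex[OF sc]] .
  have "cball (0::'a) 1 \<noteq> {}" by simp
  moreover have "continuous_on (cball (0::'a) 1) f" by (rule continuous_on_subset[OF cont]) simp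
  ultimately obtain x0 where x0: "x0 \<in> cball 0 1" "\<forall>y\<in>cball 0 1. f x0 \<le> f y"
    using continuous_attains_inf[OF compact_cball] by blast
  define m where "m = f x0"
  have lb: "f y \<ge> m" if "norm y \<le> 1" for y using x0(2) that unfolding m_def by simp
  define C where "C = \<bar>m - f 0\<bar> + 1"
  define C' where "C' = \<bar>m\<bar> + \<bar>f 0\<bar> + 1"
  have "f x \<ge> (norm x)\<^sup>2 / 2 - C * norm x - C'" for x
  proof (cases "norm x \<le> 1")
    case True
    have "(norm x)\<^sup>2 \<le> 1" using True by (simp add: power_le_one)
    moreover have "C * norm x \<ge> 0" unfolding C_def by simp
    ultimately show ?thesis using lb[OF True] unfolding C'_def by linarith
  next
    case False
    define r where "r = norm x"
    have r1: "r > 1" using False r_def by simp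
    define t where "t = 1 / r"
    have t: "0 \<le> t" "t \<le> 1" using r1 by (auto simp: t_def)
    have "f (t *\<^sub>R x + (1 - t) *\<^sub>R 0) \<le> t * f x + (1 - t) * f 0 - 1 / 2 * t * (1 - t) * (norm (x - 0))\<^sup>2"
      using sc[unfolded strongly_convex_def, rule_format, of t x 0] t by simp
    moreover have "norm (t *\<^sub>R x + (1 - t) *\<^sub>R 0) \<le> 1"
      using r1 by (simp add: t_def r_def)
    ultimately have "m \<le> t * f x + (1 - t) * f 0 - 1 / 2 * t * (1 - t) * r\<^sup>2"
      using lb[of "t *\<^sub>R x + (1 - t) *\<^sub>R 0"] r_def by simp
    hence "r * m \<le> r * (t * f x + (1 - t) * f 0 - 1 / 2 * t * (1 - t) * r\<^sup>2)"
      using r1 by simp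
    also have "\<dots> = f x + (r - 1) * f 0 - (r\<^sup>2 - r) / 2"
      using r1 by (simp add: t_def field_simps power2_eq_square)
    finally have A: "f x \<ge> r * m - (r - 1) * f 0 + (r\<^sup>2 - r) / 2" by linarith
    have "r * m - (r - 1) * f 0 = r * (m - f 0) + f 0" by algebra
    also have "\<dots> \<ge> - r * \<bar>m - f 0\<bar> - \<bar>f 0\<bar>"
    proof -
      have "r * (m - f 0) \<ge> r * (- \<bar>m - f 0\<bar>)" using r1 by (intro mult_left_mono) auto
      thus ?thesis by simp
    qed
    finally have B: "f x \<ge> - r * \<bar>m - f 0\<bar> - \<bar>f 0\<bar> + (r\<^sup>2 - r) / 2" using A by linarith
    show ?thesis unfolding C_def C'_def r_def[symmetric] using B r1 by (simp add: algebra_simps)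
  qed
  thus ?thesis by blast
qed

definition is_max :: "('a::real_inner \<Rightarrow> real) \<Rightarrow> 'a \<Rightarrow> 'a \<Rightarrow> bool" where
  "is_max f d x \<longleftrightarrow> (\<forall>x'. inner d x' - f x' \<le> inner d x - f x)"

lemma conj_max_ex:
  fixes f :: "'a::euclidean_space \<Rightarrow> real"
  assumes sc: "strongly_convex 1 f"
  shows "\<exists>x. is_max f d x"
proof -
  obtain C C' where CC: "\<And>x. f x \<ge> (norm x)\<^sup>2 / 2 - C * norm x - C'"
    using sc_growth[OF sc] by blast
  define h where "h x = inner d x - f x" for x
  define K where "K = norm d + C"
  define R where "R = 2 * \<bar>K\<bar> + 2 * \<bar>C' + f 0\<bar> + 2"
  have out: "h x < h 0" if "norm x > R" for x
  proof -
    define r where "r = norm x"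
    have R2: "R \<ge> 2" unfolding R_def by simp
    have r: "r > R" "r \<ge> 1" using that R2 unfolding r_def by linarith+
    have "h x \<le> norm d * r - f x" unfolding h_def r_def using norm_cauchy_schwarz by (smt (verit))
    also have "\<dots> \<le> K * r - r\<^sup>2 / 2 + C'" using CC[of x] unfolding K_def r_def by (simp add: algebra_simps)
    also have "\<dots> = C' - r * (r / 2 - K)" by (simp add: power2_eq_square algebra_simps)
    also have "r * (r / 2 - K) \<ge> r * (\<bar>C' + f 0\<bar> + 1)"
    proof (rule mult_left_mono)
      show "\<bar>C' + f 0\<bar> + 1 \<le> r / 2 - K" using r abs_ge_self[of K] unfolding R_def by argo
    qed (use r in simp)
    hence "C' - r * (r / 2 - K) \<le> C' - r * (\<bar>C' + f 0\<bar> + 1)" by simp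
    also have "r * (\<bar>C' + f 0\<bar> + 1) \<ge> 1 * (\<bar>C' + f 0\<bar> + 1)"
      using r by (intro mult_right_mono) auto
    hence "C' - r * (\<bar>C' + f 0\<bar> + 1) < h 0" unfolding h_def by simp
    finally show ?thesis .
  qed
  have cont: "continuous_on UNIV f"
    using convex_on_continuous[OF open_UNIV sc_convex[OF sc]] .
  have conth: "continuous_on (cball 0 R) h"
    unfolding h_def by (intro continuous_intros continuous_on_subset[OF cont]) auto
  have R0: "R \<ge> 0" unfolding R_def by simp
  obtain xs where xs: "xs \<in> cball 0 R" "\<forall>y\<in>cball 0 R. h y \<le> h xs"
    using continuous_attains_sup[OF compact_cball _ conth] R0 by fastforce
  have "h y \<le> h xs" for y
  proof (cases "norm y \<le> R")
    case True thus ?thesis using xs by auto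
  next
    case False
    hence "h y < h 0" using out by simp
    also have "h 0 \<le> h xs" using xs R0 by auto
    finally show ?thesis by simp
  qed
  thus ?thesis unfolding is_max_def h_def by blast
qed

definition xm :: "('a::real_inner \<Rightarrow> real) \<Rightarrow> 'a \<Rightarrow> 'a" where
  "xm f d = (SOME x. is_max f d x)"

lemma xm_max:
  fixes f :: "'a::euclidean_space \<Rightarrow> real"
  assumes sc: "strongly_convex 1 f"
  shows "is_max f d (xm f d)"
  unfolding xm_def using conj_max_ex[OF sc] by (rule someI_ex)

lemma fconj_eq:
  fixes f :: "'a::euclidean_space \<Rightarrow> real"
  assumes sc: "strongly_convex 1 f"
  shows "fconj f d = inner d (xm f d) - f (xm f d)"
  unfolding fconj_def
  using xm_max[OF sc, of d] unfolding is_max_def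
  by (intro cSup_eq_maximum) auto

lemma fconj_ge:
  fixes f :: "'a::euclidean_space \<Rightarrow> real"
  assumes sc: "strongly_convex 1 f"
  shows "fconj f d \<ge> inner d x - f x"
  using xm_max[OF sc, of d] fconj_eq[OF sc, of d] unfolding is_max_def by auto

lemma breg_lb:
  fixes f :: "'a::euclidean_space \<Rightarrow> real"
  assumes sc: "strongly_convex 1 f" and mx: "is_max f d x"
  shows "f y - f x - inner d (y - x) \<ge> (norm (y - x))\<^sup>2 / 2"
proof -
  define c where "c = f y - f x - inner d (y - x)"
  define q where "q = (norm (y - x))\<^sup>2"
  have key: "c \<ge> (1 - t) / 2 * q" if t: "0 < t" "t < 1" for t
  proof -
    define p where "p = t *\<^sub>R y + (1 - t) *\<^sub>R x"
    have "f p \<le> t * f y + (1 - t) * f x - 1 / 2 * t * (1 - t) * q"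
      using sc t unfolding strongly_convex_def p_def q_def by auto
    moreover have "inner d p - f p \<le> inner d x - f x" using mx unfolding is_max_def by blast
    moreover have "inner d p = t * inner d y + (1 - t) * inner d x"
      unfolding p_def by (simp add: inner_add_right)
    ultimately have "t * c \<ge> t * ((1 - t) / 2 * q)"
      unfolding c_def by (simp add: inner_diff_right algebra_simps)
    thus ?thesis using t by simp
  qed
  have q0: "q \<ge> 0" unfolding q_def by simp
  show ?thesis
  proof (rule ccontr)
    assume "\<not> ?thesis"
    hence lt: "c < q / 2" unfolding c_def q_def by simp
    hence qp: "q > 0" using key[of "1/2"] q0 by simp
    have c4: "c \<ge> q / 4" using key[of "1/2"] by simp
    define t where "t = (q / 2 - c) / q"
    have t: "0 < t" "t < 1" using lt c4 qp unfolding t_def by (auto simp: field_simps)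
    have "t * q = q / 2 - c" using qp unfolding t_def by simp
    thus False using key[OF t] lt by (simp add: algebra_simps)
  qed
qed


lemma norm_diff_sq: "(norm (u - e))\<^sup>2 = (norm u)\<^sup>2 - 2 * inner e u + (norm (e::'a::real_inner))\<^sup>2"
  by (simp add: power2_norm_eq_inner inner_diff_left inner_diff_right inner_commute)

lemma fconj_descent:
  fixes f :: "'a::euclidean_space \<Rightarrow> real"
  assumes sc: "strongly_convex 1 f"
  shows "fconj f (d + e) \<le> fconj f d + inner (xm f d) e + (norm e)\<^sup>2 / 2"
proof -
  define x where "x = xm f d"
  define x' where "x' = xm f (d + e)"
  have b: "f x' - f x - inner d (x' - x) \<ge> (norm (x' - x))\<^sup>2 / 2"
    using breg_lb[OF sc xm_max[OF sc, of d]] unfolding x_def by blast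
  have n: "(norm ((x' - x) - e))\<^sup>2 = (norm (x' - x))\<^sup>2 - 2 * inner e (x' - x) + (norm e)\<^sup>2"
    by (rule norm_diff_sq)
  have z: "0 \<le> (norm ((x' - x) - e))\<^sup>2" by (rule zero_le_power2)
  have E1: "fconj f (d + e) = inner d x' + inner e x' - f x'"
    by (simp add: fconj_eq[OF sc] x'_def inner_add_left)
  have E2: "fconj f d = inner d x - f x" by (simp add: fconj_eq[OF sc] x_def)
  have E3: "inner d (x' - x) = inner d x' - inner d x" by (simp add: inner_diff_right)
  have E4: "inner e (x' - x) = inner e x' - inner e x" by (simp add: inner_diff_right)
  have E5: "inner x e = inner e x" by (simp add: inner_commute)
  show ?thesis using z b n E1 E2 E3 E4 E5 unfolding x_def[symmetric] by linarith
qed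

lemma fconj_lower:
  fixes f :: "'a::euclidean_space \<Rightarrow> real"
  assumes sc: "strongly_convex 1 f"
  shows "fconj f d' \<ge> fconj f d + inner (xm f d) (d' - d)"
  using fconj_ge[OF sc, of d' "xm f d"] fconj_eq[OF sc, of d]
  by (simp add: inner_diff_left inner_commute)

lemma fconj_gderiv:
  fixes f :: "'a::euclidean_space \<Rightarrow> real"
  assumes sc: "strongly_convex 1 f"
  shows "GDERIV (fconj f) d :> xm f d"
  unfolding gderiv_def has_derivative_at_alt
proof (intro conjI allI impI)
  show "bounded_linear (\<lambda>h. inner h (xm f d))" by (rule bounded_linear_inner_left)
  fix e :: real assume e: "e > 0"
  show "\<exists>r>0. \<forall>y. norm (y - d) < r \<longrightarrow>
      norm (fconj f y - fconj f d - inner (y - d) (xm f d)) \<le> e * norm (y - d)"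
  proof (intro exI[of _ "2 * e"] conjI allI impI)
    show "0 < 2 * e" using e by simp
    fix y assume y: "norm (y - d) < 2 * e"
    have u: "fconj f y - fconj f d - inner (y - d) (xm f d) \<le> (norm (y - d))\<^sup>2 / 2"
      using fconj_descent[OF sc, of d "y - d"] by (simp add: inner_commute)
    have l: "fconj f y - fconj f d - inner (y - d) (xm f d) \<ge> 0"
      using fconj_lower[OF sc, of d y] by (simp add: inner_commute)
    have "norm (y - d) * norm (y - d) \<le> (2 * e) * norm (y - d)"
      using y by (intro mult_right_mono) auto
    hence "(norm (y - d))\<^sup>2 / 2 \<le> e * norm (y - d)"
      by (simp add: power2_eq_square)
    thus "norm (fconj f y - fconj f d - inner (y - d) (xm f d)) \<le> e * norm (y - d)"
      using u l by simp
  qed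
qed

lemma grad_fconj:
  fixes f :: "'a::euclidean_space \<Rightarrow> real"
  assumes sc: "strongly_convex 1 f"
  shows "grad (fconj f) d = xm f d"
  unfolding grad_def
proof (rule the_equality)
  show "GDERIV (fconj f) d :> xm f d" by (rule fconj_gderiv[OF sc])
  fix D assume "GDERIV (fconj f) d :> D"
  hence "(\<lambda>h. inner h D) = (\<lambda>h. inner h (xm f d))"
    using fconj_gderiv[OF sc, of d] unfolding gderiv_def by (rule has_derivative_unique)
  hence "inner (D - xm f d) D = inner (D - xm f d) (xm f d)" by metis
  hence "inner (D - xm f d) (D - xm f d) = 0" by (simp add: inner_diff_right)
  thus "D = xm f d" by simp
qed


lemma inner_AT: "inner (transpose A *v y) x = inner y (A *v (x::real^'n))"
proof -
  have "transpose A *v y = y v* A" using vector_transpose_matrix[of y "transpose A"] by simp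
  thus ?thesis by (simp add: dot_lmul_matrix)
qed

lemma bp_nth: "block_proj blk i w $ j = (if blk j = i then w $ j else 0)"
  by (simp add: block_proj_def)

lemma bp_add: "block_proj blk i (u + v) = block_proj blk i u + block_proj blk i v"
  by (simp add: vec_eq_iff bp_nth)
lemma bp_diff: "block_proj blk i (u - v) = block_proj blk i u - block_proj blk i v"
  by (simp add: vec_eq_iff bp_nth)
lemma bp_scale: "block_proj blk i (c *\<^sub>R u) = c *\<^sub>R block_proj blk i u"
  by (simp add: vec_eq_iff bp_nth)
lemma bp_bp: "block_proj blk j (block_proj blk i u) = (if j = i then block_proj blk i u else 0)"
  by (simp add: vec_eq_iff bp_nth)
lemma bp_idem: "block_proj blk i (block_proj blk i u) = block_proj blk i u"
  by (simp add: bp_bp)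

lemma inner_bp_bp: "inner (block_proj blk i u) (block_proj blk i v) = (\<Sum>j\<in>UNIV. if blk j = i then u $ j * v $ j else 0)"
  unfolding inner_vec_def by (rule sum.cong) (auto simp: bp_nth)

lemma bp_sym: "inner (block_proj blk i u) v = inner u (block_proj blk i (v::real^'m))"
  unfolding inner_vec_def by (rule sum.cong) (auto simp: bp_nth)

lemma bp_sym2: "inner (block_proj blk i u) v = inner (block_proj blk i u) (block_proj blk i (v::real^'m))"
  by (metis bp_idem bp_sym)

lemma sum_blocks_inner:
  assumes "\<forall>j. blk j < M"
  shows "(\<Sum>i<M. inner (block_proj blk i u) (block_proj blk i v)) = inner u (v::real^'m)"
proof -
  have "(\<Sum>i<M. inner (block_proj blk i u) (block_proj blk i v))
      = (\<Sum>i<M. \<Sum>j\<in>UNIV. if blk j = i then u $ j * v $ j else 0)"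
    by (simp add: inner_bp_bp)
  also have "\<dots> = (\<Sum>j\<in>UNIV. \<Sum>i<M. if blk j = i then u $ j * v $ j else 0)"
    by (rule sum.swap)
  also have "\<dots> = (\<Sum>j\<in>UNIV. u $ j * v $ j)"
    using assms by (simp add: sum.delta)
  also have "\<dots> = inner u v" by (simp add: inner_vec_def)
  finally show ?thesis .
qed

lemma linear_bp: "linear (block_proj blk i)"
  by (rule linearI) (simp_all add: bp_add bp_scale)

lemma bl_bpA: "bounded_linear (\<lambda>x. block_proj blk i (A *v (x::real^'n)))"
proof -
  have "linear (\<lambda>x. block_proj blk i (A *v (x::real^'n)))"
    using linear_compose[OF matrix_vector_mul_linear[of A] linear_bp[of blk i]]
    by (simp add: o_def)
  thus ?thesis by (simp add: linear_conv_bounded_linear)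
qed

lemma block_norm_ge0: "block_norm A blk i \<ge> 0"
  unfolding block_norm_def by (rule onorm_pos_le[OF bl_bpA])

lemma block_norm_bound: "norm (block_proj blk i (A *v x)) \<le> block_norm A blk i * norm x"
  unfolding block_norm_def by (rule onorm[OF bl_bpA])

lemma block_norm_pos:
  assumes "A $ j \<noteq> 0" "blk j = i"
  shows "block_norm A blk i > 0"
proof -
  define x where "x = A $ j"
  have "(A *v x) $ j = inner (A $ j) x"
    by (simp add: matrix_vector_mult_def inner_vec_def)
  hence "block_proj blk i (A *v x) $ j \<noteq> 0" using assms by (simp add: bp_nth x_def)
  hence "block_proj blk i (A *v x) \<noteq> 0" by auto
  hence "0 < norm (block_proj blk i (A *v x))" by simp
  also have "\<dots> \<le> block_norm A blk i * norm x" by (rule block_norm_bound)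
  finally show ?thesis using block_norm_ge0[of A blk i]
    by (metis less_eq_real_def mult_zero_left not_less)
qed

lemma AT_bp_bound:
  "norm (transpose A *v block_proj blk i w) \<le> block_norm A blk i * norm (block_proj blk i (w::real^'m))"
proof -
  define u where "u = transpose A *v block_proj blk i w"
  have "(norm u)\<^sup>2 = inner u u" by (simp add: power2_norm_eq_inner)
  also have "\<dots> = inner (block_proj blk i w) (A *v u)" unfolding u_def[symmetric]
    by (subst (1) u_def) (rule inner_AT)
  also have "\<dots> = inner (block_proj blk i w) (block_proj blk i (A *v u))" by (rule bp_sym2)
  also have "\<dots> \<le> norm (block_proj blk i w) * norm (block_proj blk i (A *v u))"
    by (rule norm_cauchy_schwarz)
  also have "\<dots> \<le> norm (block_proj blk i w) * (block_norm A blk i * norm u)"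
    by (intro mult_left_mono block_norm_bound) simp
  finally have *: "norm u * norm u \<le> (norm (block_proj blk i w) * block_norm A blk i) * norm u"
    by (simp add: power2_eq_square algebra_simps)
  show ?thesis
  proof (cases "norm u = 0")
    case True thus ?thesis using block_norm_ge0[of A blk i] unfolding u_def by simp
  next
    case False
    hence "norm u > 0" by simp
    with * have "norm u \<le> norm (block_proj blk i w) * block_norm A blk i"
      by (simp add: mult_le_cancel_right)
    thus ?thesis unfolding u_def by (simp add: mult.commute)
  qed
qed


lemma lmul_inner1: "inner (y v* A) x = inner y (A *v (x::real^'n))"
  by (rule dot_lmul_matrix)
lemma lmul_inner2: "inner x (y v* A) = inner y (A *v (x::real^'n))"
  using dot_lmul_matrix[of y A x] by (simp only: inner_commute)

locale arbk_setup =
  fixes A :: "real^'n^'m::finite" and b :: "real^'m" and f :: "real^'n \<Rightarrow> real"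
    and blk :: "'m \<Rightarrow> nat" and M :: nat and xhat :: "real^'n" and yhat :: "real^'m"
  assumes rows: "\<forall>j. A $ j \<noteq> 0"
    and sc: "strongly_convex 1 f"
    and xf: "A *v xhat = b"
    and xmin: "\<forall>x. A *v x = b \<longrightarrow> f xhat \<le> f x"
    and Mpos: "M \<ge> 1"
    and brange: "\<forall>j. blk j < M"
    and bonto: "\<forall>i<M. \<exists>j. blk j = i"
    and ymin: "\<forall>y. fconj f (transpose A *v yhat) - inner b yhat \<le> fconj f (transpose A *v y) - inner b y"
begin

definition "L i = (block_norm A blk i)\<^sup>2"
definition "Psi y = fconj f (transpose A *v y) - inner b y"
definition "X d = xm f d"
definition "gr y = A *v X (transpose A *v y) - b"
definition "P i w = block_proj blk i w"
definition "Pst = Psi yhat"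

lemma L_pos: "i < M \<Longrightarrow> L i > 0"
  using bonto rows block_norm_pos[of A _ blk i] unfolding L_def by fastforce

lemma Psi_min: "Pst \<le> Psi y"
  using ymin unfolding Pst_def Psi_def by blast

lemma descent_blk:
  "Psi (y - P i w) \<le> Psi y - inner (gr y) (P i w) + L i / 2 * (norm (P i w))\<^sup>2"
proof -
  define p where "p = P i w"
  define d where "d = transpose A *v y"
  define e where "e = - (transpose A *v p)"
  have de: "transpose A *v (y - p) = d + e" unfolding d_def e_def
    by (simp add: matrix_vector_mult_diff_distrib)
  have fd: "fconj f (d + e) \<le> fconj f d + inner (X d) e + (norm e)\<^sup>2 / 2"
    unfolding X_def by (rule fconj_descent[OF sc])
  have ie: "inner (X d) e = - inner p (A *v X d)"
    unfolding e_def by (simp add: lmul_inner1 lmul_inner2)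
  have ne: "norm e \<le> block_norm A blk i * norm p"
    unfolding e_def p_def P_def using AT_bp_bound[of A blk i w] by simp
  have ne2: "(norm e)\<^sup>2 \<le> L i * (norm p)\<^sup>2"
  proof -
    have "(norm e)\<^sup>2 \<le> (block_norm A blk i * norm p)\<^sup>2"
      using ne by (intro power_mono) auto
    thus ?thesis unfolding L_def by (simp add: power_mult_distrib)
  qed
  have "Psi (y - p) = fconj f (d + e) - inner b y + inner b p"
    unfolding Psi_def de by (simp add: inner_diff_right)
  moreover have "inner (gr y) p = inner (A *v X d) p - inner b p"
    unfolding gr_def d_def by (simp add: inner_diff_left)
  moreover have "Psi y = fconj f d - inner b y" unfolding Psi_def d_def ..
  ultimately show ?thesis using fd ie ne2 unfolding p_def[symmetric]
    by (simp add: inner_commute)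
qed

lemma convex_Psi: "Psi u \<ge> Psi v + inner (gr v) (u - v)"
proof -
  have "fconj f (transpose A *v u) \<ge> fconj f (transpose A *v v) + inner (X (transpose A *v v)) (transpose A *v u - transpose A *v v)"
    unfolding X_def by (rule fconj_lower[OF sc])
  moreover have "inner (X (transpose A *v v)) (transpose A *v u - transpose A *v v) = inner (u - v) (A *v X (transpose A *v v))"
    by (simp add: lmul_inner1 lmul_inner2 flip: vector_matrix_mult_diff_distrib)
  ultimately show ?thesis unfolding Psi_def gr_def
    by (simp add: inner_diff_left inner_diff_right inner_commute)
qed

lemma step_descent:
  assumes "i < M"
  shows "Psi (y - (1 / L i) *\<^sub>R P i (gr y)) \<le> Psi y - (norm (P i (gr y)))\<^sup>2 / (2 * L i)"
proof -
  have Lp: "L i > 0" using L_pos assms .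
  define g where "g = gr y"
  have pw: "P i ((1 / L i) *\<^sub>R g) = (1 / L i) *\<^sub>R P i g" unfolding P_def by (rule bp_scale)
  have "Psi (y - P i ((1 / L i) *\<^sub>R g)) \<le> Psi y - inner g (P i ((1 / L i) *\<^sub>R g)) + L i / 2 * (norm (P i ((1 / L i) *\<^sub>R g)))\<^sup>2"
    unfolding g_def by (rule descent_blk)
  moreover have "inner g (P i g) = (norm (P i g))\<^sup>2"
    unfolding P_def power2_norm_eq_inner using bp_sym2[of blk i g g] by (simp add: inner_commute)
  moreover have "norm ((1 / L i) *\<^sub>R P i g) = (1 / L i) * norm (P i g)" using Lp by simp
  ultimately have "Psi (y - (1 / L i) *\<^sub>R P i g) \<le> Psi y - (1 / L i) * (norm (P i g))\<^sup>2 + L i / 2 * ((1 / L i)^2 * (norm (P i g))\<^sup>2)"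
    unfolding pw by (simp only: inner_scaleR_right power_mult_distrib)
  also have "\<dots> = Psi y - (norm (P i g))\<^sup>2 / (2 * L i)"
    using Lp by (simp add: field_simps power2_eq_square)
  finally show ?thesis unfolding g_def .
qed

lemma gr_yhat: "gr yhat = 0"
proof -
  have "P i (gr yhat) = 0" if i: "i < M" for i
  proof -
    have "Psi yhat \<le> Psi (yhat - (1 / L i) *\<^sub>R P i (gr yhat))" using Psi_min unfolding Pst_def .
    with step_descent[OF i, of yhat] have "(norm (P i (gr yhat)))\<^sup>2 / (2 * L i) \<le> 0" by simp
    moreover have "L i > 0" using L_pos i .
    ultimately have "(norm (P i (gr yhat)))\<^sup>2 \<le> 0" by (simp add: divide_le_0_iff)
    thus ?thesis by simp
  qed
  hence "gr yhat $ j = 0" for j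
    using brange bp_nth[of blk "blk j" "gr yhat" j] unfolding P_def
    by (metis zero_index)
  thus ?thesis by (simp add: vec_eq_iff)
qed

lemma strong_duality: "Pst = - f xhat"
proof -
  define xs where "xs = X (transpose A *v yhat)"
  have Axs: "A *v xs = b" using gr_yhat unfolding gr_def xs_def by simp
  have "fconj f (transpose A *v yhat) = inner (transpose A *v yhat) xs - f xs"
    unfolding xs_def X_def by (rule fconj_eq[OF sc])
  hence "Pst = - f xs" unfolding Pst_def Psi_def by (simp add: lmul_inner1 lmul_inner2 Axs inner_commute)
  moreover have "f xhat \<le> f xs" using xmin Axs by blast
  moreover have "fconj f (transpose A *v yhat) \<ge> inner (transpose A *v yhat) xhat - f xhat"
    by (rule fconj_ge[OF sc])
  hence "Pst \<ge> - f xhat" unfolding Pst_def Psi_def by (simp add: lmul_inner1 lmul_inner2 xf inner_commute)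
  ultimately show ?thesis by simp
qed

lemma breg_eq: "bregman f (transpose A *v y) (grad (fconj f) (transpose A *v y)) xhat = Psi y - Pst"
proof -
  define d where "d = transpose A *v y"
  define x where "x = xm f d"
  have "fconj f d = inner d x - f x" unfolding x_def by (rule fconj_eq[OF sc])
  moreover have "inner d xhat = inner y b" unfolding d_def by (simp add: lmul_inner1 lmul_inner2 xf)
  ultimately show ?thesis
    unfolding bregman_def grad_fconj[OF sc] strong_duality Psi_def d_def[symmetric] x_def[symmetric]
    by (simp add: inner_diff_right inner_commute)
qed

lemma breg_ge: "bregman f d (grad (fconj f) d) xhat \<ge> (norm (grad (fconj f) d - xhat))\<^sup>2 / 2"
  unfolding bregman_def grad_fconj[OF sc]
  using breg_lb[OF sc xm_max[OF sc, of d], of xhat] by (simp add: norm_minus_commute)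

lemma Bnorm_nonneg: "Bnorm_sq A blk M w \<ge> 0"
  unfolding Bnorm_sq_def by (intro sum_nonneg) simp

lemma norm_sub_scale: "(norm (a - c *\<^sub>R (q::real^'m)))\<^sup>2 = (norm a)\<^sup>2 - 2 * c * inner a q + c\<^sup>2 * (norm q)\<^sup>2"
  using norm_diff_sq[of a "c *\<^sub>R q"] by (simp add: inner_commute power_mult_distrib)

lemma Bnorm_update:
  assumes i: "i < M"
  shows "Bnorm_sq A blk M (e - c *\<^sub>R P i q) = Bnorm_sq A blk M e - 2 * c * L i * inner (P i e) (P i q) + c\<^sup>2 * L i * (norm (P i q))\<^sup>2"
proof -
  have pj: "P j (e - c *\<^sub>R P i q) = P j e - c *\<^sub>R (if j = i then P i q else 0)" for j
    unfolding P_def by (simp add: bp_diff bp_scale bp_bp)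
  have "Bnorm_sq A blk M (e - c *\<^sub>R P i q) = (\<Sum>j<M. L j * (norm (P j e))\<^sup>2 +
          (if j = i then - 2 * c * L i * inner (P i e) (P i q) + c\<^sup>2 * L i * (norm (P i q))\<^sup>2 else 0))"
    unfolding Bnorm_sq_def P_def[symmetric] L_def[symmetric]
  proof (rule sum.cong[OF refl])
    fix j assume "j \<in> {..<M}"
    show "L j * (norm (P j (e - c *\<^sub>R P i q)))\<^sup>2 = L j * (norm (P j e))\<^sup>2 +
          (if j = i then - 2 * c * L i * inner (P i e) (P i q) + c\<^sup>2 * L i * (norm (P i q))\<^sup>2 else 0)"
      unfolding pj by (cases "j = i") (simp_all add: norm_sub_scale algebra_simps)
  qed
  also have "\<dots> = Bnorm_sq A blk M e - 2 * c * L i * inner (P i e) (P i q) + c\<^sup>2 * L i * (norm (P i q))\<^sup>2"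
    unfolding sum.distrib Bnorm_sq_def P_def[symmetric] L_def[symmetric] using i by simp
  finally show ?thesis .
qed

end

fun th :: "nat \<Rightarrow> nat \<Rightarrow> real" where
  "th M 0 = 1 / real M"
| "th M (Suc k) = (sqrt (th M k ^ 4 + 4 * (th M k)\<^sup>2) - (th M k)\<^sup>2) / 2"

lemma th_step_bounds:
  fixes t :: real assumes "0 < t"
  shows "0 < (sqrt (t ^ 4 + 4 * t\<^sup>2) - t\<^sup>2) / 2" "(sqrt (t ^ 4 + 4 * t\<^sup>2) - t\<^sup>2) / 2 < 1"
proof -
  have e: "sqrt ((t\<^sup>2)\<^sup>2) = t\<^sup>2" by (metis real_sqrt_abs abs_power2)
  have q: "(t\<^sup>2)\<^sup>2 = t ^ 4" by simp
  have e2: "sqrt (t ^ 4) = t\<^sup>2" using e unfolding q .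
  have "t\<^sup>2 = sqrt (t ^ 4)" by (rule e2[symmetric])
  also have "\<dots> < sqrt (t ^ 4 + 4 * t\<^sup>2)" using assms by (intro real_sqrt_less_mono) simp
  finally show "0 < (sqrt (t ^ 4 + 4 * t\<^sup>2) - t\<^sup>2) / 2" by simp
  have "sqrt (t ^ 4 + 4 * t\<^sup>2) < sqrt ((t\<^sup>2 + 2)\<^sup>2)"
    by (intro real_sqrt_less_mono) (simp add: power2_eq_square power4_eq_xxxx algebra_simps)
  also have "\<dots> = t\<^sup>2 + 2" by simp
  finally show "(sqrt (t ^ 4 + 4 * t\<^sup>2) - t\<^sup>2) / 2 < 1" by simp
qed

lemma th_pos: "M \<ge> 1 \<Longrightarrow> 0 < th M k \<and> th M k \<le> 1"
proof (induction k)
  case 0 thus ?case by simp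
next
  case (Suc k)
  hence pos: "0 < th M k" by simp
  have "0 < th M (Suc k)" "th M (Suc k) < 1" using th_step_bounds[OF pos] by simp_all
  thus ?case by simp
qed

lemma th_rec: "(th M (Suc k))\<^sup>2 = (1 - th M (Suc k)) * (th M k)\<^sup>2"
proof -
  define t where "t = th M k"
  define S where "S = sqrt (t ^ 4 + 4 * t\<^sup>2)"
  have S2: "S\<^sup>2 = t ^ 4 + 4 * t\<^sup>2" unfolding S_def by (simp add: zero_le_power2 add_nonneg_nonneg)
  have "(th M (Suc k))\<^sup>2 = ((S - t\<^sup>2) / 2)\<^sup>2" by (simp add: S_def t_def)
  also have "\<dots> = (S\<^sup>2 - 2 * S * t\<^sup>2 + t ^ 4) / 4" by (simp add: power2_eq_square power4_eq_xxxx algebra_simps)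
  also have "\<dots> = (1 - (S - t\<^sup>2) / 2) * t\<^sup>2" unfolding S2 by (simp add: field_simps power2_eq_square power4_eq_xxxx)
  also have "\<dots> = (1 - th M (Suc k)) * (th M k)\<^sup>2" by (simp add: S_def t_def)
  finally show ?thesis .
qed

lemma inv_rec:
  fixes p q :: real
  assumes "0 < p" "0 < q" "q\<^sup>2 = (1 - q) * p\<^sup>2"
  shows "(1 / q)\<^sup>2 - 1 / q = (1 / p)\<^sup>2"
proof -
  have "(1 / q)\<^sup>2 - 1 / q = (1 - q) / q\<^sup>2" using assms by (simp add: field_simps power2_eq_square)
  also have "\<dots> = (1 - q) * p\<^sup>2 / (q\<^sup>2 * p\<^sup>2)" using assms by simp
  also have "\<dots> = q\<^sup>2 / (q\<^sup>2 * p\<^sup>2)" using assms(3) by simp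
  also have "\<dots> = (1 / p)\<^sup>2" using assms by (simp add: field_simps power2_eq_square)
  finally show ?thesis .
qed

lemma th_inv_bound: "M \<ge> 1 \<Longrightarrow> 1 / th M k \<ge> real M + real k / 2"
proof (induction k)
  case 0 thus ?case by simp
next
  case (Suc k)
  define a where "a = 1 / th M (Suc k)"
  define c where "c = 1 / th M k"
  have p1: "0 < th M (Suc k)" "th M (Suc k) \<le> 1" using th_pos[of M "Suc k", OF Suc.prems] by blast+
  have p0: "0 < th M k" "th M k \<le> 1" using th_pos[of M k, OF Suc.prems] by blast+
  have a1: "a \<ge> 1" unfolding a_def using p1 by simp
  have c1: "c \<ge> 1" unfolding c_def using p0 by simp
  have rec: "a\<^sup>2 - a = c\<^sup>2"
    unfolding a_def c_def by (rule inv_rec[OF p0(1) p1(1) th_rec])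
  have "a \<ge> c + 1/2"
  proof (rule ccontr)
    assume "\<not> ?thesis"
    hence "c + 1/2 - a > 0" by simp
    moreover have "c + a - 1/2 > 0" using a1 c1 by simp
    ultimately have "(c + 1/2 - a) * (c + a - 1/2) > 0" by simp
    moreover have "(c + 1/2 - a) * (c + a - 1/2) = (c + 1/2)\<^sup>2 - (c + 1/2) - (a\<^sup>2 - a)"
      by (simp add: power2_eq_square field_simps)
    moreover have "(c + 1/2)\<^sup>2 - (c + 1/2) - (a\<^sup>2 - a) = - 1/4"
      unfolding rec by (simp add: power2_eq_square field_simps)
    ultimately show False by linarith
  qed
  moreover have IH: "c \<ge> real M + real k / 2" unfolding c_def using Suc.IH[OF Suc.prems] .
  moreover have "real (Suc k) / 2 = real k / 2 + 1 / 2" by simp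
  ultimately have "a \<ge> real M + real (Suc k) / 2" by linarith
  thus ?case unfolding a_def .
qed

lemma th_bound: "M \<ge> 1 \<Longrightarrow> th M k \<le> 2 / (real k + 2 * real M)"
proof -
  assume M: "M \<ge> 1"
  have p: "0 < th M k" using th_pos[OF M] by auto
  have "1 / th M k \<ge> (real k + 2 * real M) / 2" using th_inv_bound[OF M, of k] by simp
  moreover have "(real k + 2 * real M) / 2 > 0" using M by simp
  ultimately show ?thesis using p by (simp add: field_simps)
qed

lemma arbk_th: "snd (snd (arbk A b f blk M s k)) = th M k"
  by (induction k) (auto simp: Let_def split: prod.split)

lemma arbk_indep: "(\<forall>j<k. s j = s' j) \<Longrightarrow> arbk A b f blk M s k = arbk A b f blk M s' k"
  by (induction k) (simp_all add: Let_def split: prod.split)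

lemma expect_Suc:
  assumes "M \<ge> 1"
  shows "expect M (Suc k) g = expect M k (\<lambda>s. (\<Sum>i<M. g (s(k := i))) / real M)"
proof -
  have "(\<Sum>s\<in>PiE {..<Suc k} (\<lambda>_. {..<M}). g s) = (\<Sum>s\<in>PiE (insert k {..<k}) (\<lambda>_. {..<M}). g s)"
    by (simp add: lessThan_Suc)
  also have "\<dots> = (\<Sum>p\<in>{..<M} \<times> PiE {..<k} (\<lambda>_. {..<M}). g ((\<lambda>(y, h). h(k := y)) p))"
  proof -
    have inj: "inj_on (\<lambda>(y, h). h(k := y)) ({..<M} \<times> PiE {..<k} (\<lambda>_. {..<M}))"
      using inj_combinator[of k "{..<k}" "\<lambda>_. {..<M}"] by simp
    show ?thesis unfolding PiE_insert_eq sum.reindex[OF inj] by (simp add: o_def)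
  qed
  also have "\<dots> = (\<Sum>i<M. \<Sum>s\<in>PiE {..<k} (\<lambda>_. {..<M}). g (s(k := i)))"
    by (simp add: sum.cartesian_product split_def)
  also have "\<dots> = (\<Sum>s\<in>PiE {..<k} (\<lambda>_. {..<M}). \<Sum>i<M. g (s(k := i)))"
    by (rule sum.swap)
  finally have *: "(\<Sum>s\<in>PiE {..<Suc k} (\<lambda>_. {..<M}). g s) = (\<Sum>s\<in>PiE {..<k} (\<lambda>_. {..<M}). \<Sum>i<M. g (s(k := i)))" .
  show ?thesis unfolding expect_def * using assms
    by (simp add: sum_divide_distrib[symmetric] field_simps)
qed

lemma expect_mono:
  assumes "\<And>s. s \<in> PiE {..<k} (\<lambda>_. {..<M}) \<Longrightarrow> g s \<le> h s"
  shows "expect M k g \<le> expect M k h"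
  unfolding expect_def using assms by (intro divide_right_mono sum_mono) auto

lemma expect_cmult: "expect M k (\<lambda>s. c * g s) = c * expect M k g"
  unfolding expect_def by (simp add: sum_distrib_left)


lemma div_le_aux:
  fixes x m q t w :: real
  assumes "x \<le> m * q - m * t * w" "m > 0"
  shows "x / m \<le> q - t * w"
proof -
  have "x / m \<le> (m * q - m * t * w) / m" using assms by (simp add: divide_right_mono)
  also have "\<dots> = q - t * w" using assms(2) by (simp add: field_simps)
  finally show ?thesis .
qed

context arbk_setup begin

definition "Y s k = fst (arbk A b f blk M s k)"
definition "Z s k = fst (snd (arbk A b f blk M s k))"
definition "V s k = (1 - th M k) *\<^sub>R Y s k + th M k *\<^sub>R Z s k"

lemma th_pos': "0 < th M k" "th M k \<le> 1" using th_pos[OF Mpos] by auto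

lemma YZ_Suc:
  "Y s (Suc k) = V s k - (1 / L (s k)) *\<^sub>R P (s k) (gr (V s k))"
  "Z s (Suc k) = Z s k - (1 / (real M * th M k * L (s k))) *\<^sub>R P (s k) (gr (V s k))"
proof -
  obtain y z t where e: "arbk A b f blk M s k = (y, z, t)" by (cases "arbk A b f blk M s k") auto
  have t: "t = th M k" using arbk_th[of A b f blk M s k] e by simp
  have y: "Y s k = y" and z: "Z s k = z" unfolding Y_def Z_def e by simp_all
  define v where "v = (1 - t) *\<^sub>R y + t *\<^sub>R z"
  have v: "V s k = v" unfolding V_def v_def y z t ..
  define i where "i = s k"
  define q where "q = P i (gr v)"
  have r: "block_proj blk i (A *v grad (fconj f) (transpose A *v v) - b) /\<^sub>R (block_norm A blk i)\<^sup>2 = (1 / L i) *\<^sub>R q"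
    unfolding q_def P_def gr_def X_def L_def grad_fconj[OF sc] by (simp add: divide_inverse)
  have Mt: "real M * t \<noteq> 0" using Mpos th_pos'(1)[of k] t by simp
  have ar: "arbk A b f blk M s (Suc k) = (v + (real M * t) *\<^sub>R ((z - (1 / (real M * t)) *\<^sub>R ((1 / L i) *\<^sub>R q)) - z),
      z - (1 / (real M * t)) *\<^sub>R ((1 / L i) *\<^sub>R q), (sqrt (t ^ 4 + 4 * t\<^sup>2) - t\<^sup>2) / 2)"
    unfolding v_def i_def by (simp only: arbk.simps e Let_def prod.case r[unfolded v_def i_def])
  have "v + (real M * t) *\<^sub>R ((z - (1 / (real M * t)) *\<^sub>R ((1 / L i) *\<^sub>R q)) - z) = v - (1 / L i) *\<^sub>R q"
    using Mt by (simp add: scaleR_scaleR)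
  moreover have "z - (1 / (real M * t)) *\<^sub>R ((1 / L i) *\<^sub>R q) = z - (1 / (real M * t * L i)) *\<^sub>R q"
    by (simp add: scaleR_scaleR)
  ultimately show "Y s (Suc k) = V s k - (1 / L (s k)) *\<^sub>R P (s k) (gr (V s k))"
    "Z s (Suc k) = Z s k - (1 / (real M * th M k * L (s k))) *\<^sub>R P (s k) (gr (V s k))"
    unfolding Y_def Z_def ar using v z t by (simp_all add: q_def i_def Y_def Z_def)
qed

lemma step_ineq:
  assumes t: "0 < t" "t \<le> 1" and v: "v = (1 - t) *\<^sub>R y + t *\<^sub>R z"
  shows "(\<Sum>i<M. Psi (v - (1 / L i) *\<^sub>R P i (gr v)) - Pst
            + (real M)\<^sup>2 * t\<^sup>2 / 2 * Bnorm_sq A blk M (z - (1 / (real M * t * L i)) *\<^sub>R P i (gr v) - yhat)) / real M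
         \<le> (1 - t) * (Psi y - Pst) + (real M)\<^sup>2 * t\<^sup>2 / 2 * Bnorm_sq A blk M (z - yhat)"
proof -
  define g where "g = gr v"
  define e where "e = z - yhat"
  define Q where "Q = Psi v - Pst + (real M)\<^sup>2 * t\<^sup>2 / 2 * Bnorm_sq A blk M e"
  have Mp: "real M > 0" using Mpos by simp
  have trm: "Psi (v - (1 / L i) *\<^sub>R P i g) - Pst
            + (real M)\<^sup>2 * t\<^sup>2 / 2 * Bnorm_sq A blk M (z - (1 / (real M * t * L i)) *\<^sub>R P i g - yhat)
        \<le> Q - real M * t * inner (P i e) (P i g)" if i: "i < M" for i
  proof -
    have Lp: "L i > 0" using L_pos i .
    define c where "c = 1 / (real M * t * L i)"
    have E: "z - c *\<^sub>R P i g - yhat = e - c *\<^sub>R P i g" unfolding e_def by simp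
    have B: "Bnorm_sq A blk M (z - c *\<^sub>R P i g - yhat) = Bnorm_sq A blk M e - 2 * c * L i * inner (P i e) (P i g) + c\<^sup>2 * L i * (norm (P i g))\<^sup>2"
      unfolding E by (rule Bnorm_update[OF i])
    have PP: "P i (P i g) = P i g" unfolding P_def by (rule bp_idem)
    have D: "Psi (v - (1 / L i) *\<^sub>R P i g) \<le> Psi v - (norm (P i g))\<^sup>2 / (2 * L i)"
      unfolding g_def by (rule step_descent[OF i])
    have "(real M)\<^sup>2 * t\<^sup>2 / 2 * (Bnorm_sq A blk M e - 2 * c * L i * inner (P i e) (P i g) + c\<^sup>2 * L i * (norm (P i g))\<^sup>2)
        = (real M)\<^sup>2 * t\<^sup>2 / 2 * Bnorm_sq A blk M e - real M * t * inner (P i e) (P i g) + (norm (P i g))\<^sup>2 / (2 * L i)"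
      unfolding c_def using Mp t Lp by (simp add: field_simps power2_eq_square)
    note eq = this
    show ?thesis unfolding c_def[symmetric] B Q_def using eq D by linarith
  qed
  have "(\<Sum>i<M. Psi (v - (1 / L i) *\<^sub>R P i g) - Pst
            + (real M)\<^sup>2 * t\<^sup>2 / 2 * Bnorm_sq A blk M (z - (1 / (real M * t * L i)) *\<^sub>R P i g - yhat))
        \<le> (\<Sum>i<M. Q - real M * t * inner (P i e) (P i g))"
    by (rule sum_mono) (use trm in auto)
  also have "\<dots> = real M * Q - real M * t * inner e g"
    using sum_blocks_inner[OF brange, of e g] unfolding P_def
    by (simp add: sum_subtractf sum_distrib_left[symmetric])
  finally have S: "(\<Sum>i<M. Psi (v - (1 / L i) *\<^sub>R P i g) - Pst
            + (real M)\<^sup>2 * t\<^sup>2 / 2 * Bnorm_sq A blk M (z - (1 / (real M * t * L i)) *\<^sub>R P i g - yhat)) / real M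
        \<le> Q - t * inner e g"
    by (rule div_le_aux[OF _ Mp])
  have c1: "Psi y \<ge> Psi v + inner g (y - v)" unfolding g_def by (rule convex_Psi)
  have c2: "Pst \<ge> Psi v + inner g (yhat - v)" unfolding g_def Pst_def by (rule convex_Psi)
  have vec: "(1 - t) *\<^sub>R (y - v) + t *\<^sub>R (yhat - v) = - t *\<^sub>R e"
    unfolding v e_def by (simp add: algebra_simps)
  have "(1 - t) * inner g (y - v) + t * inner g (yhat - v) = inner g ((1 - t) *\<^sub>R (y - v) + t *\<^sub>R (yhat - v))"
    by (simp add: inner_add_right)
  also have "\<dots> = - t * inner e g" unfolding vec by (simp add: inner_commute)
  finally have I: "(1 - t) * inner g (y - v) + t * inner g (yhat - v) = - t * inner e g" .
  have "(1 - t) * Psi y \<ge> (1 - t) * (Psi v + inner g (y - v))" using c1 t by (intro mult_left_mono) auto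
  moreover have "t * Pst \<ge> t * (Psi v + inner g (yhat - v))" using c2 t by (intro mult_left_mono) auto
  ultimately have "Psi v - t * inner e g \<le> (1 - t) * Psi y + t * Pst" using I by (simp add: algebra_simps)
  hence "Q - t * inner e g \<le> (1 - t) * (Psi y - Pst) + (real M)\<^sup>2 * t\<^sup>2 / 2 * Bnorm_sq A blk M (z - yhat)"
    unfolding Q_def e_def by (simp add: algebra_simps)
  with S show ?thesis unfolding g_def by simp
qed

definition "Phi s k = (1 - th M k) / (th M k)\<^sup>2 * (Psi (Y s k) - Pst) + (real M)\<^sup>2 / 2 * Bnorm_sq A blk M (Z s k - yhat)"

lemma Phi_step: "(\<Sum>i<M. Phi (s(k := i)) (Suc k)) / real M \<le> Phi s k"
proof -
  define t where "t = th M k"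
  have t: "0 < t" "t \<le> 1" unfolding t_def by (rule th_pos'(1), rule th_pos'(2))
  have Ys: "Y (s(k := i)) k = Y s k" "Z (s(k := i)) k = Z s k" for i
    unfolding Y_def Z_def using arbk_indep[of k "s(k := i)" s A b f blk M] by simp_all
  have Vs: "V (s(k := i)) k = V s k" for i unfolding V_def Ys ..
  have co: "(1 - th M (Suc k)) / (th M (Suc k))\<^sup>2 = 1 / t\<^sup>2"
  proof -
    have "(th M (Suc k))\<^sup>2 = (1 - th M (Suc k)) * t\<^sup>2" unfolding t_def by (rule th_rec)
    moreover have "th M (Suc k) > 0" by (rule th_pos'(1))
    ultimately show ?thesis using t by (simp add: field_simps)
  qed
  have Phi_i: "Phi (s(k := i)) (Suc k) = 1 / t\<^sup>2 * (Psi (V s k - (1 / L i) *\<^sub>R P i (gr (V s k))) - Pst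
            + (real M)\<^sup>2 * t\<^sup>2 / 2 * Bnorm_sq A blk M (Z s k - (1 / (real M * t * L i)) *\<^sub>R P i (gr (V s k)) - yhat))" for i
    unfolding Phi_def co YZ_Suc Vs Ys using t by (simp add: t_def field_simps)
  have "(\<Sum>i<M. Phi (s(k := i)) (Suc k)) / real M = 1 / t\<^sup>2 * ((\<Sum>i<M. Psi (V s k - (1 / L i) *\<^sub>R P i (gr (V s k))) - Pst
            + (real M)\<^sup>2 * t\<^sup>2 / 2 * Bnorm_sq A blk M (Z s k - (1 / (real M * t * L i)) *\<^sub>R P i (gr (V s k)) - yhat)) / real M)"
    unfolding Phi_i by (simp add: sum_distrib_left)
  also have "\<dots> \<le> 1 / t\<^sup>2 * ((1 - t) * (Psi (Y s k) - Pst) + (real M)\<^sup>2 * t\<^sup>2 / 2 * Bnorm_sq A blk M (Z s k - yhat))"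
    by (intro mult_left_mono step_ineq[OF t]) (simp_all add: V_def t_def)
  also have "\<dots> = Phi s k" unfolding Phi_def t_def[symmetric] using t by (simp add: field_simps)
  finally show ?thesis .
qed

end

context arbk_setup begin

lemma th_co: "(1 - th M (Suc k)) / (th M (Suc k))\<^sup>2 = 1 / (th M k)\<^sup>2"
proof -
  define q where "q = th M (Suc k)"
  define p where "p = th M k"
  have r: "q\<^sup>2 = (1 - q) * p\<^sup>2" unfolding p_def q_def by (rule th_rec)
  have q: "q > 0" unfolding q_def by (rule th_pos'(1))
  have p: "p > 0" unfolding p_def by (rule th_pos'(1))
  have "(1 - q) / q\<^sup>2 = (1 / q)\<^sup>2 - 1 / q" using q by (simp add: field_simps power2_eq_square)
  also have "\<dots> = (1 / p)\<^sup>2" by (rule inv_rec[OF p q r])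
  also have "\<dots> = 1 / p\<^sup>2" by (simp add: power_one_over)
  finally show ?thesis unfolding p_def q_def .
qed

lemma YZ0: "Y s 0 = 0" "Z s 0 = 0" unfolding Y_def Z_def by simp_all

lemma Phi0: "Phi s 0 = (real M)\<^sup>2 * ((1 - 1 / real M) * (Psi (Y s 0) - Pst) + 1 / 2 * Bnorm_sq A blk M (Y s 0 - yhat))"
  using Mpos unfolding Phi_def YZ0 by (simp add: field_simps power2_eq_square)

lemma Phi0_indep: "Phi s 0 = Phi s' 0"
  unfolding Phi0 YZ0 ..

lemma E_Phi: "expect M k (\<lambda>s. Phi s k) \<le> Phi s0 0"
proof (induction k)
  case 0
  have "expect M 0 (\<lambda>s. Phi s 0) = Phi (\<lambda>x. undefined) 0" unfolding expect_def by simp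
  also have "\<dots> = Phi s0 0" by (rule Phi0_indep)
  finally show ?case by simp
next
  case (Suc k)
  have "expect M (Suc k) (\<lambda>s. Phi s (Suc k)) = expect M k (\<lambda>s. (\<Sum>i<M. Phi (s(k := i)) (Suc k)) / real M)"
    by (rule expect_Suc[OF Mpos])
  also have "\<dots> \<le> expect M k (\<lambda>s. Phi s k)"
    by (rule expect_mono) (rule Phi_step)
  also have "\<dots> \<le> Phi s0 0" by (rule Suc.IH)
  finally show ?case .
qed

lemma D_le_Phi: "Psi (Y s (Suc k)) - Pst \<le> (th M k)\<^sup>2 * Phi s (Suc k)"
proof -
  have tp: "th M k > 0" by (rule th_pos'(1))
  have "(th M k)\<^sup>2 * Phi s (Suc k) = (Psi (Y s (Suc k)) - Pst) + (th M k)\<^sup>2 * ((real M)\<^sup>2 / 2 * Bnorm_sq A blk M (Z s (Suc k) - yhat))"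
  proof -
    define p where "p = th M k"
    have p: "p > 0" unfolding p_def using tp .
    show ?thesis unfolding Phi_def th_co p_def[symmetric] using p by (simp add: field_simps)
  qed
  moreover have "(th M k)\<^sup>2 * ((real M)\<^sup>2 / 2 * Bnorm_sq A blk M (Z s (Suc k) - yhat)) \<ge> 0"
    using Bnorm_nonneg by simp
  ultimately show ?thesis by simp
qed

end

theorem theorem2:
  fixes A :: "real^'n^('m::{finite,linorder})" and b :: "real^('m::{finite,linorder})" and f :: "real^'n \<Rightarrow> real"
    and blk :: "('m::{finite,linorder}) \<Rightarrow> nat" and M :: nat and xhat :: "real^'n" and yhat :: "real^('m::{finite,linorder})" and k :: nat
  assumes rows_nonzero: "\<forall>j. A $ j \<noteq> 0"
    and b_range: "b \<in> range (\<lambda>x. A *v x)"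
    and sc: "strongly_convex 1 f"
    and xhat_feas: "A *v xhat = b"
    and xhat_min: "\<forall>x. A *v x = b \<longrightarrow> f xhat \<le> f x"
    and M_pos: "M \<ge> 1"
    and blk_range: "\<forall>j. blk j < M"
    and blk_onto: "\<forall>i<M. \<exists>j. blk j = i"
    and blk_consec: "mono blk"
    and yhat_min: "\<forall>y. fconj f (transpose A *v yhat) - inner b yhat \<le> fconj f (transpose A *v y) - inner b y"
    and k: "k \<ge> 1"
  shows "1/2 * expect M k (\<lambda>s. (norm (arbk_x A b f blk M s k - xhat))\<^sup>2)
           \<le> expect M k (\<lambda>s. bregman f (arbk_d A b f blk M s k) (arbk_x A b f blk M s k) xhat)
       \<and> expect M k (\<lambda>s. bregman f (arbk_d A b f blk M s k) (arbk_x A b f blk M s k) xhat)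
           \<le> 4 * (real M)\<^sup>2 / (real k - 1 + 2 * real M)\<^sup>2 *
             ((1 - 1 / real M) * bregman f (arbk_d A b f blk M (\<lambda>_. 0) 0) (arbk_x A b f blk M (\<lambda>_. 0) 0) xhat
              + 1/2 * Bnorm_sq A blk M (arbk_y A b f blk M (\<lambda>_. 0) 0 - yhat))"
proof -
  interpret S: arbk_setup A b f blk M xhat yhat
    using rows_nonzero sc xhat_feas xhat_min M_pos blk_range blk_onto yhat_min
    by unfold_locales auto
  have D: "bregman f (arbk_d A b f blk M s j) (arbk_x A b f blk M s j) xhat = S.Psi (S.Y s j) - S.Pst" for s j
    unfolding arbk_x_def arbk_d_def arbk_y_def S.Y_def[symmetric] by (rule S.breg_eq)
  have part1: "1/2 * expect M k (\<lambda>s. (norm (arbk_x A b f blk M s k - xhat))\<^sup>2)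
           \<le> expect M k (\<lambda>s. bregman f (arbk_d A b f blk M s k) (arbk_x A b f blk M s k) xhat)"
  proof -
    have "1/2 * expect M k (\<lambda>s. (norm (arbk_x A b f blk M s k - xhat))\<^sup>2)
        = expect M k (\<lambda>s. 1/2 * (norm (arbk_x A b f blk M s k - xhat))\<^sup>2)"
      by (rule expect_cmult[symmetric])
    also have "\<dots> \<le> expect M k (\<lambda>s. bregman f (arbk_d A b f blk M s k) (arbk_x A b f blk M s k) xhat)"
    proof (rule expect_mono)
      fix s
      show "1/2 * (norm (arbk_x A b f blk M s k - xhat))\<^sup>2 \<le> bregman f (arbk_d A b f blk M s k) (arbk_x A b f blk M s k) xhat"
        using S.breg_ge[of "arbk_d A b f blk M s k"] unfolding arbk_x_def by simp
    qed
    finally show ?thesis .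
  qed
  obtain k' where k': "k = Suc k'" using k by (cases k) auto
  define C0 where "C0 = (1 - 1 / real M) * bregman f (arbk_d A b f blk M (\<lambda>_. 0) 0) (arbk_x A b f blk M (\<lambda>_. 0) 0) xhat
              + 1/2 * Bnorm_sq A blk M (arbk_y A b f blk M (\<lambda>_. 0) 0 - yhat)"
  have C0: "S.Phi (\<lambda>_. 0) 0 = (real M)\<^sup>2 * C0"
    unfolding C0_def S.Phi0 D arbk_y_def S.Y_def[symmetric] ..
  have C0_nonneg: "C0 \<ge> 0"
  proof -
    have "1 - 1 / real M \<ge> 0" using M_pos by simp
    moreover have "bregman f (arbk_d A b f blk M (\<lambda>_. 0) 0) (arbk_x A b f blk M (\<lambda>_. 0) 0) xhat \<ge> 0"
      unfolding D using S.Psi_min by simp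
    ultimately show ?thesis unfolding C0_def using S.Bnorm_nonneg by simp
  qed
  have "expect M k (\<lambda>s. bregman f (arbk_d A b f blk M s k) (arbk_x A b f blk M s k) xhat)
      \<le> expect M k (\<lambda>s. (th M k')\<^sup>2 * S.Phi s k)"
    by (rule expect_mono) (unfold D k', rule S.D_le_Phi)
  also have "\<dots> = (th M k')\<^sup>2 * expect M k (\<lambda>s. S.Phi s k)" by (rule expect_cmult)
  also have "\<dots> \<le> (th M k')\<^sup>2 * ((real M)\<^sup>2 * C0)"
    unfolding C0[symmetric] by (intro mult_left_mono S.E_Phi) simp
  also have "\<dots> \<le> (2 / (real k' + 2 * real M))\<^sup>2 * ((real M)\<^sup>2 * C0)"
  proof (rule mult_right_mono)
    show "(th M k')\<^sup>2 \<le> (2 / (real k' + 2 * real M))\<^sup>2"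
      using th_bound[OF M_pos, of k'] S.th_pos'(1)[of k'] by (intro power_mono) auto
    show "0 \<le> (real M)\<^sup>2 * C0" using C0_nonneg by simp
  qed
  also have "\<dots> = 4 * (real M)\<^sup>2 / (real k - 1 + 2 * real M)\<^sup>2 * C0"
    unfolding k' by (simp add: power_divide)
  finally show ?thesis using part1 unfolding C0_def by simp
qed


end
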